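(* Let $\mathbf Q$ be a stabilizer group on $n$ qubits with independent generating set $\mathrm{gen}(\mathbf Q)$ of Hermitian Pauli operators, $H_{\mathbf Q}=-\sum_{g\in\mathrm{gen}(\mathbf Q)}g$, and $\Delta_{\mathrm{gap}}:=2$ (twice the minimal coefficient of $H_{\mathbf Q}$). Let $V=-\sum_{P\in\mathbf P(V)}w_P P$ with $\mathbf P(V)$ a set of Hermitian Pauli operators and $w_P>0$, and $H=H_{\mathbf Q}+V$. Let $V_\perp=-\sum_{P\in\mathbf P(V)\setminus C(\mathbf Q)}w_P P$ and assume $V_\perp\neq0$. Assume: (i) there is a state $|\psi'_{\mathbf Q}\rangle\in V_{\mathbf Q}$ with $\langle\psi'_{\mathbf Q}|V_\perp^2|\psi'_{\mathbf Q}\rangle\neq0$; (ii) $\sum_{P\in\mathbf P(V)\setminus\mathbf Q}w_P<\Delta_{\mathrm{gap}}-2\sum_{P\in\mathbf P(V)\cap\mathbf Q}w_P$. For $\lambda\ge0$ let $|\psi'_{\mathbf Q}(\lambda)\rangle=\big(|\psi'_{\mathbf Q}\rangle-\lambda V_\perp|\psi'_{\mathbf Q}\rangle\big)/\big\||\psi'_{\mathbf Q}\rangle-\lambda V_\perp|\psi'_{\mathbf Q}\rangle\big\|$ and $\Delta E(\lambda)=\langle\psi'_{\mathbf Q}|H|\psi'_{\mathbf Q}\rangle-\langle\psi'_{\mathbf Q}(\lambda)|H|\psi'_{\mathbf Q}(\lambda)\rangle$. Then there exists $\lambda_{\max}>0$ such that $\Delta E(\lambda)$ is strictly positive and monotonically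 increasing for all $0<\lambda<\lambda_{\max}$.
   Context: A stabilizer group is an abelian subgroup of the $n$-qubit Pauli group $\{\pm1,\pm i\}\cdot\{\mathbb 1,X,Y,Z\}^{\otimes n}$ not containing $-\mathbb 1$; its code space is $V_{\mathbf Q}=\{|\psi\rangle: q|\psi\rangle=|\psi\rangle\ \forall q\in\mathbf Q\}$. $C(\mathbf Q)$ denotes the set of Pauli operators commuting with every element of $\mathbf Q$ (the Pauli centralizer). *)

theory Defs
  imports "Jordan_Normal_Form.Matrix"
begin

definition kron :: "complex mat \<Rightarrow> complex mat \<Rightarrow> complex mat" where
  "kron A B = mat (dim_row A * dim_row B) (dim_col A * dim_col B)
     (\<lambda>(i, j). A $$ (i div dim_row B, j div dim_col B) * B $$ (i mod dim_row B, j mod dim_col B))"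

definition pauli_I :: "complex mat" where "pauli_I = mat_of_rows_list 2 [[1, 0], [0, 1]]"
definition pauli_X :: "complex mat" where "pauli_X = mat_of_rows_list 2 [[0, 1], [1, 0]]"
definition pauli_Y :: "complex mat" where "pauli_Y = mat_of_rows_list 2 [[0, - \<i>], [\<i>, 0]]"
definition pauli_Z :: "complex mat" where "pauli_Z = mat_of_rows_list 2 [[1, 0], [0, -1]]"

text \<open>Tensor product of a list of single-qubit operators (qubit 1 first).\<close>
definition tensor_list :: "complex mat list \<Rightarrow> complex mat" where
  "tensor_list ps = foldr kron ps (1\<^sub>m 1)"

definition pauli_group :: "nat \<Rightarrow> complex mat set" where
  "pauli_group n = {c \<cdot>\<^sub>m tensor_list ps | c ps. c \<in> {1, -1, \<i>, -\<i>} \<and> length ps = n \<and>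
       set ps \<subseteq> {pauli_I, pauli_X, pauli_Y, pauli_Z}}"

definition hermitian_mat :: "complex mat \<Rightarrow> bool" where
  "hermitian_mat A \<longleftrightarrow> dim_row A = dim_col A \<and>
     (\<forall>i < dim_row A. \<forall>j < dim_col A. A $$ (i, j) = cnj (A $$ (j, i)))"

definition stabilizer_group :: "nat \<Rightarrow> complex mat set \<Rightarrow> bool" where
  "stabilizer_group n Q \<longleftrightarrow> Q \<subseteq> pauli_group n \<and> 1\<^sub>m (2^n) \<in> Q \<and>
     (\<forall>a\<in>Q. \<forall>b\<in>Q. a * b \<in> Q) \<and>
     (\<forall>a\<in>Q. \<exists>b\<in>Q. a * b = 1\<^sub>m (2^n)) \<and>
     (\<forall>a\<in>Q. \<forall>b\<in>Q. a * b = b * a) \<and>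
     - 1\<^sub>m (2^n) \<notin> Q"

text \<open>Subgroup of the n-qubit Pauli group generated by a set of Pauli operators
  (monoid closure; equals the group closure since Paulis have finite order).\<close>
inductive_set generated :: "nat \<Rightarrow> complex mat set \<Rightarrow> complex mat set" for n G where
  gen_one: "1\<^sub>m (2^n) \<in> generated n G"
| gen_base: "g \<in> G \<Longrightarrow> g \<in> generated n G"
| gen_mult: "a \<in> generated n G \<Longrightarrow> b \<in> generated n G \<Longrightarrow> a * b \<in> generated n G"

definition independent_gens :: "nat \<Rightarrow> complex mat set \<Rightarrow> bool" where
  "independent_gens n G \<longleftrightarrow> (\<forall>g\<in>G. g \<notin> generated n (G - {g}))"

definition code_space :: "nat \<Rightarrow> complex mat set \<Rightarrow> complex vec set" where
  "code_space n Q = {\<psi>. \<psi> \<in> carrier_vec (2^n) \<and> (\<forall>q\<in>Q. q *\<^sub>v \<psi> = \<psi>)}"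

definition pauli_centralizer :: "nat \<Rightarrow> complex mat set \<Rightarrow> complex mat set" where
  "pauli_centralizer n Q = {P \<in> pauli_group n. \<forall>q\<in>Q. P * q = q * P}"

definition lin_comb :: "nat \<Rightarrow> (complex mat \<Rightarrow> complex) \<Rightarrow> complex mat set \<Rightarrow> complex mat" where
  "lin_comb n c S = mat (2^n) (2^n) (\<lambda>(i, j). \<Sum>P\<in>S. c P * P $$ (i, j))"

definition expect :: "complex mat \<Rightarrow> complex vec \<Rightarrow> complex" where
  "expect A \<phi> = (A *\<^sub>v \<phi>) \<bullet>c \<phi>"

definition vnorm :: "complex vec \<Rightarrow> real" where
  "vnorm \<phi> = sqrt (Re (\<phi> \<bullet>c \<phi>))"

end

theory Submission
  imports Defs
begin

lemma sum_div_mod_split: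
  fixes g :: "nat \<Rightarrow> 'a::comm_monoid_add"
  shows "(\<Sum>k<b*d. g k) = (\<Sum>k1<b. \<Sum>k2<d. g (k1*d + k2))"
proof -
  have "(\<Sum>k<b*d. g k) = (\<Sum>m<b. sum g {m * d ..< m*d + d})"
    by (rule sum.nat_group[symmetric])
  also have "\<dots> = (\<Sum>k1<b. \<Sum>k2<d. g (k1*d + k2))"
  proof (rule sum.cong[OF refl])
    fix m show "sum g {m * d ..< m*d + d} = (\<Sum>k2<d. g (m*d + k2))"
      using sum.shift_bounds_nat_ivl[of g 0 "m*d" d] by (simp add: lessThan_atLeast0 add.commute)
  qed
  finally show ?thesis .
qed

lemma kron_carrier[simp]: "kron A B \<in> carrier_mat (dim_row A * dim_row B) (dim_col A * dim_col B)"
  by (simp add: kron_def)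
lemma kron_dims[simp]: "dim_row (kron A B) = dim_row A * dim_row B" "dim_col (kron A B) = dim_col A * dim_col B"
  by (simp_all add: kron_def)
lemma kron_index[simp]: "i < dim_row A * dim_row B \<Longrightarrow> j < dim_col A * dim_col B \<Longrightarrow>
  kron A B $$ (i,j) = A $$ (i div dim_row B, j div dim_col B) * B $$ (i mod dim_row B, j mod dim_col B)"
  by (simp add: kron_def)

lemma kron_mult:
  assumes A: "A \<in> carrier_mat a b" and B: "B \<in> carrier_mat c d" and C: "C \<in> carrier_mat b e"
    and D: "D \<in> carrier_mat d f" and d: "d > 0"
  shows "kron A B * kron C D = kron (A*C) (B*D)"
proof (rule eq_matI)
  show "dim_row (kron A B * kron C D) = dim_row (kron (A * C) (B * D))" using A B C D by simp
  show "dim_col (kron A B * kron C D) = dim_col (kron (A * C) (B * D))" using A B C D by simp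
  fix i j assume i: "i < dim_row (kron (A * C) (B * D))" and j: "j < dim_col (kron (A * C) (B * D))"
  have i': "i < a * c" and j': "j < e * f" using i j A B C D by auto
  have c0: "c > 0" and f0: "f > 0" using i' j' by (auto intro: ccontr)
  have idc: "i div c < a" using i' c0 by (simp add: less_mult_imp_div_less)
  have jdf: "j div f < e" using j' f0 by (simp add: less_mult_imp_div_less)
  have "(kron A B * kron C D) $$ (i,j) = (\<Sum>k<b*d. kron A B $$ (i,k) * kron C D $$ (k,j))"
    using i' j' A B C D by (simp add: times_mat_def scalar_prod_def row_def col_def lessThan_atLeast0)
  also have "\<dots> = (\<Sum>k1<b. \<Sum>k2<d. kron A B $$ (i,k1*d+k2) * kron C D $$ (k1*d+k2,j))"
    by (rule sum_div_mod_split)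
  also have "\<dots> = (\<Sum>k1<b. \<Sum>k2<d. (A $$ (i div c, k1) * C $$ (k1, j div f)) * (B $$ (i mod c, k2) * D $$ (k2, j mod f)))"
  proof (intro sum.cong refl)
    fix k1 k2 assume k1: "k1 \<in> {..<b}" and k2: "k2 \<in> {..<d}"
    have lt: "k1*d+k2 < b*d" using k1 k2
      by (metis lessThan_iff add.commute add_less_mono1 mult.commute mult_Suc_right less_eq_Suc_le mult_le_mono2 order_less_le_trans)
    have dv: "(k1*d+k2) div d = k1" "(k1*d+k2) mod d = k2" using k2 by auto
    show "kron A B $$ (i,k1*d+k2) * kron C D $$ (k1*d+k2,j) = (A $$ (i div c, k1) * C $$ (k1, j div f)) * (B $$ (i mod c, k2) * D $$ (k2, j mod f))"
      using A B C D i' j' lt dv by simp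
  qed
  also have "\<dots> = (\<Sum>k1<b. A $$ (i div c, k1) * C $$ (k1, j div f)) * (\<Sum>k2<d. B $$ (i mod c, k2) * D $$ (k2, j mod f))"
    by (simp add: sum_product)
  also have "\<dots> = kron (A*C) (B*D) $$ (i,j)"
    using A B C D i' j' idc jdf c0 f0
    by (simp add: times_mat_def scalar_prod_def row_def col_def lessThan_atLeast0)
  finally show "(kron A B * kron C D) $$ (i,j) = kron (A*C) (B*D) $$ (i,j)" .
qed

definition S4 :: "complex mat set" where "S4 = {pauli_I, pauli_X, pauli_Y, pauli_Z}"

lemma pauli_entries[simp]:
  "pauli_I \<in> carrier_mat 2 2" "pauli_X \<in> carrier_mat 2 2" "pauli_Y \<in> carrier_mat 2 2" "pauli_Z \<in> carrier_mat 2 2"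
  "pauli_I $$ (0,0) = 1" "pauli_I $$ (0,Suc 0) = 0" "pauli_I $$ (Suc 0,0) = 0" "pauli_I $$ (Suc 0,Suc 0) = 1"
  "pauli_X $$ (0,0) = 0" "pauli_X $$ (0,Suc 0) = 1" "pauli_X $$ (Suc 0,0) = 1" "pauli_X $$ (Suc 0,Suc 0) = 0"
  "pauli_Y $$ (0,0) = 0" "pauli_Y $$ (0,Suc 0) = -\<i>" "pauli_Y $$ (Suc 0,0) = \<i>" "pauli_Y $$ (Suc 0,Suc 0) = 0"
  "pauli_Z $$ (0,0) = 1" "pauli_Z $$ (0,Suc 0) = 0" "pauli_Z $$ (Suc 0,0) = 0" "pauli_Z $$ (Suc 0,Suc 0) = -1"
  by (auto simp: pauli_I_def pauli_X_def pauli_Y_def pauli_Z_def mat_of_rows_list_def)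

lemma S4_carrier: "a \<in> S4 \<Longrightarrow> a \<in> carrier_mat 2 2"
  by (auto simp: S4_def)

lemma all2: "(\<forall>i<2. P (i::nat)) \<longleftrightarrow> P 0 \<and> P (Suc 0)"
  by (auto simp: less_2_cases_iff)

lemma herm2: "A \<in> carrier_mat 2 2 \<Longrightarrow> hermitian_mat A \<longleftrightarrow> A $$ (0,0) = cnj (A $$ (0,0)) \<and> A $$ (0,Suc 0) = cnj (A $$ (Suc 0,0)) \<and> A $$ (Suc 0,0) = cnj (A $$ (0,Suc 0)) \<and> A $$ (Suc 0,Suc 0) = cnj (A $$ (Suc 0,Suc 0))"
  by (auto simp: hermitian_mat_def all2)

lemma S4_herm: "a \<in> S4 \<Longrightarrow> hermitian_mat a"
  by (auto simp: S4_def herm2)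

lemma mat2_eq_iff: "A \<in> carrier_mat 2 2 \<Longrightarrow> B \<in> carrier_mat 2 2 \<Longrightarrow> A = B \<longleftrightarrow>
  (A $$ (0,0) = B $$ (0,0) \<and> A $$ (0,Suc 0) = B $$ (0,Suc 0) \<and> A $$ (Suc 0,0) = B $$ (Suc 0,0) \<and> A $$ (Suc 0,Suc 0) = B $$ (Suc 0,Suc 0))"
  by (auto simp: mat_eq_iff all2)

lemma mult2_carrier[simp]: "A \<in> carrier_mat 2 2 \<Longrightarrow> B \<in> carrier_mat 2 2 \<Longrightarrow> A * B \<in> carrier_mat 2 2" by auto

lemma mult2_index: "A \<in> carrier_mat 2 2 \<Longrightarrow> B \<in> carrier_mat 2 2 \<Longrightarrow> i < 2 \<Longrightarrow> j < 2 \<Longrightarrow>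
   (A * B) $$ (i,j) = A $$ (i,0) * B $$ (0,j) + A $$ (i,Suc 0) * B $$ (Suc 0,j)"
  by (simp add: times_mat_def scalar_prod_def row_def col_def numeral_2_eq_2)

lemma smult2[simp]: "A \<in> carrier_mat 2 2 \<Longrightarrow> c \<cdot>\<^sub>m A \<in> carrier_mat 2 2"
  "A \<in> carrier_mat 2 2 \<Longrightarrow> i < 2 \<Longrightarrow> j < 2 \<Longrightarrow> (c \<cdot>\<^sub>m A) $$ (i,j) = c * A $$ (i,j)"
  by auto

lemma S4_sq: "a \<in> S4 \<Longrightarrow> a * a = 1\<^sub>m 2"
  by (auto simp: S4_def mat2_eq_iff mult2_index all2)

lemma S4_comm: "a \<in> S4 \<Longrightarrow> b \<in> S4 \<Longrightarrow> a * b = b * a \<or> a * b = (-1) \<cdot>\<^sub>m (b * a)"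
  by (auto simp: S4_def mat2_eq_iff mult2_index all2)

lemma smult_smult_mat: "a \<cdot>\<^sub>m (b \<cdot>\<^sub>m A) = (a*b::'a::comm_semiring_0) \<cdot>\<^sub>m A"
  by (rule eq_matI) (auto simp: ac_simps)
lemma one_smult_mat': "(1::'a::semiring_1) \<cdot>\<^sub>m A = A"
  by (rule eq_matI) auto

lemma divmod_bounds: "i < a * (b::nat) \<Longrightarrow> i div b < a \<and> i mod b < b"
  by (metis less_mult_imp_div_less mod_less_divisor mult_zero_right not_less_zero gr0I)

lemma kron_smult_left: "kron (s \<cdot>\<^sub>m A) B = s \<cdot>\<^sub>m kron A B"
  by (rule eq_matI) (auto simp: kron_def dest!: divmod_bounds)
lemma kron_smult_right: "kron A (s \<cdot>\<^sub>m B) = s \<cdot>\<^sub>m kron A B"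
  by (rule eq_matI) (auto simp: kron_def dest!: divmod_bounds)

lemma kron_one: assumes "b > 0" shows "kron (1\<^sub>m a) (1\<^sub>m b) = 1\<^sub>m (a*b)"
proof (rule eq_matI)
  fix i j assume i: "i < dim_row (1\<^sub>m (a*b))" and j: "j < dim_col (1\<^sub>m (a*b))"
  have "(i div b = j div b \<and> i mod b = j mod b) \<longleftrightarrow> i = j"
    by (metis div_mult_mod_eq)
  moreover have "i div b < a" "j div b < a" using i j assms
    by (auto simp: less_mult_imp_div_less)
  ultimately show "kron (1\<^sub>m a) (1\<^sub>m b) $$ (i, j) = 1\<^sub>m (a * b) $$ (i, j)"
    using i j assms by auto
qed auto

lemma kron_herm: assumes "hermitian_mat A" "hermitian_mat B" shows "hermitian_mat (kron A B)"
proof -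
  have sq: "dim_row A = dim_col A" "dim_row B = dim_col B" using assms by (auto simp: hermitian_mat_def)
  show ?thesis unfolding hermitian_mat_def
  proof (intro conjI allI impI)
    show "dim_row (kron A B) = dim_col (kron A B)" using sq by simp
    fix i j assume i: "i < dim_row (kron A B)" and j: "j < dim_col (kron A B)"
    have b0: "dim_row B > 0" using i by (auto intro: ccontr)
    have i2: "i div dim_row B < dim_row A" "j div dim_row B < dim_row A" using i j sq b0
      by (auto simp: less_mult_imp_div_less)
    have i3: "i mod dim_row B < dim_row B" "j mod dim_row B < dim_row B" using b0 by auto
    have hA: "A $$ (i div dim_row B, j div dim_row B) = cnj (A $$ (j div dim_row B, i div dim_row B))"
      using assms(1) i2 sq unfolding hermitian_mat_def by metis
    have hB: "B $$ (i mod dim_row B, j mod dim_row B) = cnj (B $$ (j mod dim_row B, i mod dim_row B))"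
      using assms(2) i3 sq unfolding hermitian_mat_def by metis
    have e1: "kron A B $$ (i, j) = A $$ (i div dim_row B, j div dim_row B) * B $$ (i mod dim_row B, j mod dim_row B)"
      using i j sq by simp
    have e2: "kron A B $$ (j, i) = A $$ (j div dim_row B, i div dim_row B) * B $$ (j mod dim_row B, i mod dim_row B)"
      using i j sq by simp
    show "kron A B $$ (i, j) = cnj (kron A B $$ (j, i))"
      unfolding e1 e2 hA hB by simp
  qed
qed

lemma tensor_list_Nil[simp]: "tensor_list [] = 1\<^sub>m 1" by (simp add: tensor_list_def)
lemma tensor_list_Cons[simp]: "tensor_list (a # ps) = kron a (tensor_list ps)" by (simp add: tensor_list_def)

lemma tensor_props: "set ps \<subseteq> S4 \<Longrightarrow> tensor_list ps \<in> carrier_mat (2^length ps) (2^length ps) \<and>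
   hermitian_mat (tensor_list ps) \<and> tensor_list ps * tensor_list ps = 1\<^sub>m (2^length ps)"
proof (induction ps)
  case Nil
  then show ?case by (auto simp: hermitian_mat_def)
next
  case (Cons a ps)
  then have IH: "tensor_list ps \<in> carrier_mat (2^length ps) (2^length ps)" "hermitian_mat (tensor_list ps)"
     "tensor_list ps * tensor_list ps = 1\<^sub>m (2^length ps)" and a: "a \<in> S4" by auto
  have ac: "a \<in> carrier_mat 2 2" using a S4_carrier by auto
  have "kron a (tensor_list ps) * kron a (tensor_list ps) = kron (a*a) (tensor_list ps * tensor_list ps)"
    using IH ac by (intro kron_mult) auto
  also have "\<dots> = 1\<^sub>m (2 ^ length (a#ps))" using IH a S4_sq by (simp add: kron_one)
  finally show ?case using IH ac kron_herm[OF S4_herm[OF a] IH(2)] by auto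
qed

lemma tensor_comm: "set ps \<subseteq> S4 \<Longrightarrow> set qs \<subseteq> S4 \<Longrightarrow> length ps = length qs \<Longrightarrow>
  \<exists>s. (s = 1 \<or> s = -1) \<and> tensor_list ps * tensor_list qs = s \<cdot>\<^sub>m (tensor_list qs * tensor_list ps)"
proof (induction ps arbitrary: qs)
  case Nil
  then show ?case by (intro exI[of _ 1]) auto
next
  case (Cons a ps)
  then obtain b qs' where qs: "qs = b # qs'" by (cases qs) auto
  have a: "a \<in> S4" and b: "b \<in> S4" and ps: "set ps \<subseteq> S4" and qs': "set qs' \<subseteq> S4" and len: "length ps = length qs'"
    using Cons.prems qs by auto
  obtain s where s: "s = 1 \<or> s = -1" and st: "tensor_list ps * tensor_list qs' = s \<cdot>\<^sub>m (tensor_list qs' * tensor_list ps)"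
    using Cons.IH[OF ps qs' len] by blast
  obtain r where r: "r = 1 \<or> r = -1" and rt: "a * b = r \<cdot>\<^sub>m (b * a)"
    using S4_comm[OF a b] by (metis one_smult_mat')
  have ac: "a \<in> carrier_mat 2 2" "b \<in> carrier_mat 2 2" using a b S4_carrier by auto
  have tp: "tensor_list ps \<in> carrier_mat (2^length ps) (2^length ps)" "tensor_list qs' \<in> carrier_mat (2^length ps) (2^length ps)"
    using tensor_props[OF ps] tensor_props[OF qs'] len by auto
  have "tensor_list (a#ps) * tensor_list qs = kron (a*b) (tensor_list ps * tensor_list qs')"
    using qs ac tp by (simp, intro kron_mult) auto
  also have "\<dots> = (r*s) \<cdot>\<^sub>m kron (b*a) (tensor_list qs' * tensor_list ps)"
    by (simp add: rt st kron_smult_left kron_smult_right smult_smult_mat mult.commute)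
  also have "kron (b*a) (tensor_list qs' * tensor_list ps) = tensor_list qs * tensor_list (a#ps)"
    using qs ac tp by (simp, intro kron_mult[symmetric]) auto
  finally show ?case using r s by (intro exI[of _ "r*s"]) auto
qed

definition ip :: "complex vec \<Rightarrow> complex vec \<Rightarrow> complex" where
  "ip x y = (\<Sum>i<dim_vec y. x $ i * cnj (y $ i))"

lemma cip: "x \<bullet>c y = ip x y"
  by (simp add: ip_def scalar_prod_def atLeast0LessThan)

lemma mv_index: "A \<in> carrier_mat N N \<Longrightarrow> x \<in> carrier_vec N \<Longrightarrow> i < N \<Longrightarrow>
  (A *\<^sub>v x) $ i = (\<Sum>j<N. A $$ (i,j) * x $ j)"
  by (simp add: mult_mat_vec_def scalar_prod_def row_def atLeast0LessThan)

lemma herm_entry: "hermitian_mat A \<Longrightarrow> A \<in> carrier_mat N N \<Longrightarrow> i < N \<Longrightarrow> j < N \<Longrightarrow> cnj (A $$ (j,i)) = A $$ (i,j)"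
  unfolding hermitian_mat_def by (metis carrier_matD)

lemma ip_mv_left: assumes "A \<in> carrier_mat N N" "x \<in> carrier_vec N" "y \<in> carrier_vec N" shows
  "ip (A *\<^sub>v x) y = (\<Sum>i<N. \<Sum>j<N. A $$ (i,j) * x $ j * cnj (y $ i))"
  unfolding ip_def
proof (rule sum.cong)
  show "{..<dim_vec y} = {..<N}" using assms by simp
  fix i assume "i \<in> {..<N}"
  then have "(A *\<^sub>v x) $ i = (\<Sum>j<N. A $$ (i,j) * x $ j)" using assms by (intro mv_index) auto
  then show "(A *\<^sub>v x) $ i * cnj (y $ i) = (\<Sum>j<N. A $$ (i,j) * x $ j * cnj (y $ i))"
    by (simp only: sum_distrib_right)
qed

lemma ip_mv_right: assumes "A \<in> carrier_mat N N" "x \<in> carrier_vec N" "y \<in> carrier_vec N" shows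
  "ip x (A *\<^sub>v y) = (\<Sum>i<N. \<Sum>j<N. x $ i * cnj (A $$ (i,j)) * cnj (y $ j))"
  unfolding ip_def
proof (rule sum.cong)
  show "{..<dim_vec (A *\<^sub>v y)} = {..<N}" using assms by simp
  fix i assume "i \<in> {..<N}"
  then have "(A *\<^sub>v y) $ i = (\<Sum>j<N. A $$ (i,j) * y $ j)" using assms by (intro mv_index) auto
  then show "x $ i * cnj ((A *\<^sub>v y) $ i) = (\<Sum>j<N. x $ i * cnj (A $$ (i,j)) * cnj (y $ j))"
    by (simp only: cnj_sum sum_distrib_left complex_cnj_mult mult.assoc)
qed

lemma herm_ip: assumes A: "A \<in> carrier_mat N N" and h: "hermitian_mat A"
  and x: "x \<in> carrier_vec N" and y: "y \<in> carrier_vec N"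
  shows "ip (A *\<^sub>v x) y = ip x (A *\<^sub>v y)"
proof -
  have "ip (A *\<^sub>v x) y = (\<Sum>i<N. \<Sum>j<N. A $$ (i,j) * x $ j * cnj (y $ i))"
    using A x y by (rule ip_mv_left)
  also have "\<dots> = (\<Sum>j<N. \<Sum>i<N. A $$ (i,j) * x $ j * cnj (y $ i))"
    by (rule sum.swap)
  also have "\<dots> = (\<Sum>j<N. \<Sum>i<N. x $ j * cnj (A $$ (j,i)) * cnj (y $ i))"
    by (intro sum.cong refl) (simp add: herm_entry[OF h A])
  also have "\<dots> = ip x (A *\<^sub>v y)"
    using A x y by (rule ip_mv_right[symmetric])
  finally show ?thesis .
qed

lemma ip_sym: "dim_vec x = dim_vec y \<Longrightarrow> ip y x = cnj (ip x y)"
  by (simp add: ip_def cnj_sum mult.commute)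

lemma ip_add_left: "dim_vec x = dim_vec z \<Longrightarrow> dim_vec y = dim_vec z \<Longrightarrow> ip (x + y) z = ip x z + ip y z"
  by (simp add: ip_def sum.distrib distrib_right)
lemma ip_minus_left: "dim_vec x = dim_vec z \<Longrightarrow> dim_vec y = dim_vec z \<Longrightarrow> ip (x - y) z = ip x z - ip y z"
  by (simp add: ip_def sum_subtractf left_diff_distrib)
lemma ip_minus_right: "dim_vec x = dim_vec z \<Longrightarrow> dim_vec y = dim_vec z \<Longrightarrow> ip x (y - z) = ip x y - ip x z"
  by (simp add: ip_def sum_subtractf right_diff_distrib)
lemma ip_smult_left: "dim_vec x = dim_vec z \<Longrightarrow> ip (c \<cdot>\<^sub>v x) z = c * ip x z"
  by (simp add: ip_def sum_distrib_left mult.assoc)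
lemma ip_smult_right: "ip x (c \<cdot>\<^sub>v z) = cnj c * ip x z"
  by (simp add: ip_def sum_distrib_left mult.left_commute)

lemma ip_self: "ip x x = complex_of_real (\<Sum>i<dim_vec x. (cmod (x $ i))^2)"
  unfolding ip_def of_real_sum by (intro sum.cong refl) (simp add: complex_norm_square[symmetric])

lemma ip_self_zero: assumes "ip x x = 0" shows "x = 0\<^sub>v (dim_vec x)"
proof -
  have "complex_of_real (\<Sum>i<dim_vec x. (cmod (x $ i))^2) = 0" using assms ip_self[of x] by simp
  then have "(\<Sum>i<dim_vec x. (cmod (x $ i))^2) = 0" by (simp only: of_real_eq_0_iff)
  then have "\<forall>i\<in>{..<dim_vec x}. (cmod (x $ i))^2 = 0"
    by (subst (asm) sum_nonneg_eq_0_iff) auto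
  then show ?thesis by (intro eq_vecI) auto
qed

lemma smult_mat_vec: "dim_vec x = dim_col A \<Longrightarrow> (c \<cdot>\<^sub>m A) *\<^sub>v x = c \<cdot>\<^sub>v (A *\<^sub>v x)"
  by (rule eq_vecI) (auto simp: mult_mat_vec_def scalar_prod_def sum_distrib_left mult.assoc intro!: sum.cong)

lemma lc_carrier[simp]: "lin_comb n c S \<in> carrier_mat (2^n) (2^n)"
  by (simp add: lin_comb_def)

lemma lc_ip: assumes x: "x \<in> carrier_vec (2^n)" and y: "y \<in> carrier_vec (2^n)"
  and S: "\<forall>P\<in>S. P \<in> carrier_mat (2^n) (2^n)"
  shows "ip (lin_comb n c S *\<^sub>v x) y = (\<Sum>P\<in>S. c P * ip (P *\<^sub>v x) y)"
proof -
  let ?N = "2^n::nat"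
  have "ip (lin_comb n c S *\<^sub>v x) y = (\<Sum>i<?N. \<Sum>j<?N. lin_comb n c S $$ (i,j) * x $ j * cnj (y $ i))"
    using x y by (intro ip_mv_left) auto
  also have "\<dots> = (\<Sum>i<?N. \<Sum>j<?N. \<Sum>P\<in>S. c P * (P $$ (i,j) * x $ j * cnj (y $ i)))"
    by (intro sum.cong refl) (simp add: lin_comb_def sum_distrib_right mult.assoc)
  also have "\<dots> = (\<Sum>P\<in>S. \<Sum>i<?N. \<Sum>j<?N. c P * (P $$ (i,j) * x $ j * cnj (y $ i)))"
    by (simp only: sum.swap[of _ S])
  also have "\<dots> = (\<Sum>P\<in>S. c P * ip (P *\<^sub>v x) y)"
  proof (rule sum.cong[OF refl])
    fix P assume "P \<in> S"
    then have "ip (P *\<^sub>v x) y = (\<Sum>i<?N. \<Sum>j<?N. P $$ (i,j) * x $ j * cnj (y $ i))"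
      using x y S by (intro ip_mv_left) auto
    then show "(\<Sum>i<?N. \<Sum>j<?N. c P * (P $$ (i,j) * x $ j * cnj (y $ i))) = c P * ip (P *\<^sub>v x) y"
      by (simp only: sum_distrib_left mult.assoc)
  qed
  finally show ?thesis .
qed

lemma lc_herm: assumes S: "\<forall>P\<in>S. P \<in> carrier_mat (2^n) (2^n) \<and> hermitian_mat P" and c: "\<forall>P\<in>S. cnj (c P) = c P"
  shows "hermitian_mat (lin_comb n c S)"
  unfolding hermitian_mat_def
proof (intro conjI allI impI)
  show "dim_row (lin_comb n c S) = dim_col (lin_comb n c S)" by (simp add: lin_comb_def)
  fix i j assume i: "i < dim_row (lin_comb n c S)" and j: "j < dim_col (lin_comb n c S)"
  have i': "i < 2^n" and j': "j < 2^n" using i j by (auto simp: lin_comb_def)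
  have eq: "\<And>P. P \<in> S \<Longrightarrow> c P * P $$ (i,j) = cnj (c P * P $$ (j,i))"
  proof -
    fix P assume P: "P \<in> S"
    have "cnj (P $$ (j,i)) = P $$ (i,j)" using S P i' j' by (intro herm_entry[of P "2^n"]) auto
    moreover have "cnj (c P) = c P" using c P by blast
    ultimately show "c P * P $$ (i,j) = cnj (c P * P $$ (j,i))" by (simp only: complex_cnj_mult)
  qed
  have "lin_comb n c S $$ (i, j) = (\<Sum>P\<in>S. c P * P $$ (i,j))" using i' j' by (simp add: lin_comb_def)
  also have "\<dots> = (\<Sum>P\<in>S. cnj (c P * P $$ (j,i)))" by (rule sum.cong[OF refl eq])
  also have "\<dots> = cnj (\<Sum>P\<in>S. c P * P $$ (j,i))" by (simp only: cnj_sum)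
  also have "(\<Sum>P\<in>S. c P * P $$ (j,i)) = lin_comb n c S $$ (j, i)" using i' j' by (simp add: lin_comb_def)
  finally show "lin_comb n c S $$ (i, j) = cnj (lin_comb n c S $$ (j, i))" .
qed

lemma herm_add: assumes "hermitian_mat A" "hermitian_mat B" "A \<in> carrier_mat N N" "B \<in> carrier_mat N N"
  shows "hermitian_mat (A + B)"
  unfolding hermitian_mat_def
proof (intro conjI allI impI)
  show "dim_row (A + B) = dim_col (A + B)" using assms by simp
  fix i j assume "i < dim_row (A + B)" "j < dim_col (A + B)"
  then have i: "i < N" "j < N" using assms by auto
  show "(A + B) $$ (i, j) = cnj ((A + B) $$ (j, i))"
    using i assms herm_entry[of A N i j] herm_entry[of B N i j] by simp
qed

lemma pauli_carrier: "P \<in> pauli_group n \<Longrightarrow> P \<in> carrier_mat (2^n) (2^n)"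
proof -
  assume "P \<in> pauli_group n"
  then obtain c ps where P: "P = c \<cdot>\<^sub>m tensor_list ps" and ps: "length ps = n" "set ps \<subseteq> S4"
    unfolding pauli_group_def S4_def by blast
  show ?thesis using tensor_props[OF ps(2)] ps P by simp
qed

lemma neg_smult_mat: "(-1::complex) \<cdot>\<^sub>m A = - A"
  by (rule eq_matI) auto

lemma pauli_dich: assumes "P \<in> pauli_group n" "q \<in> pauli_group n"
  shows "P * q = q * P \<or> P * q = - (q * P)"
proof -
  obtain c ps where P: "P = c \<cdot>\<^sub>m tensor_list ps" and ps: "length ps = n" "set ps \<subseteq> S4"
    using assms(1) unfolding pauli_group_def S4_def by blast
  obtain d qs where q: "q = d \<cdot>\<^sub>m tensor_list qs" and qs: "length qs = n" "set qs \<subseteq> S4"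
    using assms(2) unfolding pauli_group_def S4_def by blast
  have tp: "tensor_list ps \<in> carrier_mat (2^n) (2^n)" "tensor_list qs \<in> carrier_mat (2^n) (2^n)"
    using tensor_props[OF ps(2)] tensor_props[OF qs(2)] ps qs by auto
  obtain s where s: "s = 1 \<or> s = -1" and st: "tensor_list ps * tensor_list qs = s \<cdot>\<^sub>m (tensor_list qs * tensor_list ps)"
    using tensor_comm[OF ps(2) qs(2)] ps qs by auto
  have "P * q = (c*d) \<cdot>\<^sub>m (tensor_list ps * tensor_list qs)"
    unfolding P q mult_smult_assoc_mat[OF tp(1) smult_carrier_mat[OF tp(2)]] mult_smult_distrib[OF tp(1) tp(2)]
    by (simp add: smult_smult_mat)
  also have "\<dots> = s \<cdot>\<^sub>m ((d*c) \<cdot>\<^sub>m (tensor_list qs * tensor_list ps))"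
    by (simp add: st smult_smult_mat mult.commute mult.left_commute)
  also have "(d*c) \<cdot>\<^sub>m (tensor_list qs * tensor_list ps) = q * P"
    unfolding P q mult_smult_assoc_mat[OF tp(2) smult_carrier_mat[OF tp(1)]] mult_smult_distrib[OF tp(2) tp(1)]
    by (simp add: smult_smult_mat)
  finally show ?thesis using s by (auto simp: one_smult_mat' neg_smult_mat)
qed

lemma pauli_unitary: assumes "q \<in> pauli_group n" and x: "x \<in> carrier_vec (2^n)" and y: "y \<in> carrier_vec (2^n)"
  shows "ip (q *\<^sub>v x) (q *\<^sub>v y) = ip x y"
proof -
  obtain c ps where q: "q = c \<cdot>\<^sub>m tensor_list ps" and ps: "length ps = n" "set ps \<subseteq> S4" and c: "c \<in> {1, -1, \<i>, -\<i>}"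
    using assms(1) unfolding pauli_group_def S4_def by blast
  let ?T = "tensor_list ps"
  have T: "?T \<in> carrier_mat (2^n) (2^n)" "hermitian_mat ?T" "?T * ?T = 1\<^sub>m (2^n)"
    using tensor_props[OF ps(2)] ps by auto
  have cc: "c * cnj c = 1" using c by auto
  have "ip (q *\<^sub>v x) (q *\<^sub>v y) = c * cnj c * ip (?T *\<^sub>v x) (?T *\<^sub>v y)"
    using T x y by (simp add: q smult_mat_vec ip_smult_left ip_smult_right mult.assoc)
  also have "ip (?T *\<^sub>v x) (?T *\<^sub>v y) = ip x (?T *\<^sub>v (?T *\<^sub>v y))"
    using T x y by (intro herm_ip) auto
  also have "?T *\<^sub>v (?T *\<^sub>v y) = y" using T y
    by (metis assoc_mult_mat_vec one_mult_mat_vec)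
  finally show ?thesis using cc by simp
qed

lemma real_part:
  fixes a k :: real assumes a: "a > 0"
  defines "g \<equiv> (\<lambda>t. t * (2*a + k*t) / (1 + a*t^2))"
  shows "\<exists>tmax>0. (\<forall>t. 0 < t \<and> t < tmax \<longrightarrow> g t > 0) \<and> mono_on {0<..<tmax} g"
proof -
  define tm where "tm = min (a/(2*(\<bar>k\<bar>+1))) (1/(2*(a+1)))"
  have tm0: "tm > 0" using a by (simp add: tm_def)
  have b1: "\<bar>k\<bar> * t < a/2" if "0 < t" "t < tm" for t
  proof -
    have "t < a/(2*(\<bar>k\<bar>+1))" using that by (simp add: tm_def)
    then have "t * (2*(\<bar>k\<bar>+1)) < a" by (simp add: field_simps)
    then show ?thesis using that by (simp add: algebra_simps)
  qed
  have b2: "a * t < 1/2" "t < 1" if "0 < t" "t < tm" for t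
  proof -
    have "t < 1/(2*(a+1))" using that by (simp add: tm_def)
    then have "t * (2*(a+1)) < 1" using a by (simp add: field_simps)
    then show "a * t < 1/2" "t < 1" using that a by (simp_all add: algebra_simps) (smt (verit) mult_pos_pos)
  qed
  have pos: "g t > 0" if "0 < t" "t < tm" for t
  proof -
    have "k * t \<ge> - (\<bar>k\<bar> * t)" using that by (cases "k \<ge> 0") (auto simp: abs_if)
    then have "2*a + k*t > 0" using b1[OF that] a by linarith
    moreover have "1 + a*t^2 > 0" using a by (simp add: add_pos_nonneg)
    ultimately show ?thesis using that by (simp add: g_def)
  qed
  have mono: "g s \<le> g t" if "s \<in> {0<..<tm}" "t \<in> {0<..<tm}" "s \<le> t" for s t
  proof -
    have s: "0 < s" "s < tm" and t: "0 < t" "t < tm" using that by auto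
    have Ds: "1 + a*s^2 > 0" and Dt: "1 + a*t^2 > 0" using a by (simp_all add: add_pos_nonneg)
    have "k*(t+s) \<ge> - (\<bar>k\<bar>*t + \<bar>k\<bar>*s)"
      using s t by (cases "k \<ge> 0") (auto simp: abs_if algebra_simps)
    moreover have "a*t*s < 1/2"
    proof -
      have "a*t*s < (1/2) * 1" using b2[OF t] b2[OF s] s t a
        by (intro mult_strict_mono) auto
      then show ?thesis by simp
    qed
    moreover have "2*a^2*t*s = 2*a*(a*t*s)" by (simp add: power2_eq_square)
    moreover have "2*a*(a*t*s) < 2*a*(1/2)" using \<open>a*t*s < 1/2\<close> a by (intro mult_strict_left_mono) auto
    ultimately have key: "2*a + k*(t+s) - 2*a^2*t*s \<ge> 0"
      using b1[OF s] b1[OF t] a by linarith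
    have "g t - g s = (t*(2*a + k*t)*(1 + a*s^2) - s*(2*a + k*s)*(1 + a*t^2)) / ((1 + a*t^2) * (1 + a*s^2))"
      unfolding g_def using Ds Dt by (simp add: diff_frac_eq)
    also have "t*(2*a + k*t)*(1 + a*s^2) - s*(2*a + k*s)*(1 + a*t^2) = (t - s) * (2*a + k*(t+s) - 2*a^2*t*s)"
      by (simp add: power2_eq_square algebra_simps)
    finally have eq: "g t - g s = (t - s) * (2*a + k*(t+s) - 2*a^2*t*s) / ((1 + a*t^2) * (1 + a*s^2))" .
    have "0 \<le> (t - s) * (2*a + k*(t+s) - 2*a^2*t*s) / ((1 + a*t^2) * (1 + a*s^2))"
      using key that Ds Dt by simp
    then show ?thesis using eq by simp
  qed
  show ?thesis using tm0 pos mono by (intro exI[of _ tm]) (auto simp: mono_on_def)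
qed

lemma ip_uminus_left: "dim_vec x = dim_vec y \<Longrightarrow> ip (- x) y = - ip x y"
  by (simp add: ip_def sum_negf)

lemma anti_zero: assumes Qp: "Q \<subseteq> pauli_group n" and q: "q \<in> Q" and psi: "\<psi> \<in> code_space n Q"
  and A: "A \<in> carrier_mat (2^n) (2^n)" and anti: "A * q = - (q * A)"
  shows "ip (A *\<^sub>v \<psi>) \<psi> = 0"
proof -
  have pc: "\<psi> \<in> carrier_vec (2^n)" and qpsi: "q *\<^sub>v \<psi> = \<psi>" using psi q by (auto simp: code_space_def)
  have qp: "q \<in> pauli_group n" using q Qp by auto
  have qc: "q \<in> carrier_mat (2^n) (2^n)" using pauli_carrier[OF qp] .
  have qA: "q * A = - (A * q)" using anti by simp
  have "q *\<^sub>v (A *\<^sub>v \<psi>) = (q * A) *\<^sub>v \<psi>" using qc A pc by simp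
  also have "\<dots> = - ((A * q) *\<^sub>v \<psi>)" unfolding qA using qc A pc by simp
  also have "(A * q) *\<^sub>v \<psi> = A *\<^sub>v \<psi>" using qc A pc qpsi by simp
  finally have e: "q *\<^sub>v (A *\<^sub>v \<psi>) = - (A *\<^sub>v \<psi>)" .
  have "ip (A *\<^sub>v \<psi>) \<psi> = ip (q *\<^sub>v (A *\<^sub>v \<psi>)) (q *\<^sub>v \<psi>)"
    using pauli_unitary[OF qp, of "A *\<^sub>v \<psi>" \<psi>] A pc by simp
  also have "\<dots> = - ip (A *\<^sub>v \<psi>) \<psi>" unfolding e qpsi using A pc by (intro ip_uminus_left) simp
  finally show ?thesis by simp
qed

lemma expand: assumes A: "A \<in> carrier_mat N N" and x: "x \<in> carrier_vec N" and y: "y \<in> carrier_vec N"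
  shows "ip (A *\<^sub>v (x - \<tau> \<cdot>\<^sub>v y)) (x - \<tau> \<cdot>\<^sub>v y) =
     ip (A *\<^sub>v x) x - cnj \<tau> * ip (A *\<^sub>v x) y - \<tau> * ip (A *\<^sub>v y) x + \<tau> * cnj \<tau> * ip (A *\<^sub>v y) y"
proof -
  have "A *\<^sub>v (x - \<tau> \<cdot>\<^sub>v y) = A *\<^sub>v x - \<tau> \<cdot>\<^sub>v (A *\<^sub>v y)"
    using A x y by (simp add: mult_minus_distrib_mat_vec mult_mat_vec)
  then show ?thesis using A x y
    by (simp add: ip_minus_left ip_minus_right ip_smult_left ip_smult_right algebra_simps)
qed

lemma energy_formula:
  assumes Hc: "H \<in> carrier_mat N N" and Hh: "hermitian_mat H"
    and pc: "\<psi> \<in> carrier_vec N" and vc: "v \<in> carrier_vec N"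
    and v\<psi>: "ip v \<psi> = 0" and Hv: "ip (H *\<^sub>v \<psi>) v = complex_of_real a" and vv: "ip v v = complex_of_real a"
    and pp: "Re (ip \<psi> \<psi>) = 1" and a: "a \<ge> 0"
  shows "Re (expect H \<psi>) - Re (expect H (let u = \<psi> - complex_of_real t \<cdot>\<^sub>v v in complex_of_real (1 / vnorm u) \<cdot>\<^sub>v u))
     = t * (2*a + (a * Re (expect H \<psi>) - Re (ip (H *\<^sub>v v) v)) * t) / (1 + a * t^2)"
proof -
  define \<tau> where "\<tau> = complex_of_real t"
  define u where "u = \<psi> - \<tau> \<cdot>\<^sub>v v"
  define E0 where "E0 = Re (ip (H *\<^sub>v \<psi>) \<psi>)"
  define c where "c = Re (ip (H *\<^sub>v v) v)"
  have uc: "u \<in> carrier_vec N" using pc vc by (simp add: u_def)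
  have \<psi>v: "ip \<psi> v = 0" using ip_sym[of v \<psi>] v\<psi> pc vc by simp
  have "ip u u = ip (1\<^sub>m N *\<^sub>v (\<psi> - \<tau> \<cdot>\<^sub>v v)) (\<psi> - \<tau> \<cdot>\<^sub>v v)" using uc by (simp add: u_def)
  also have "\<dots> = ip \<psi> \<psi> - cnj \<tau> * ip \<psi> v - \<tau> * ip v \<psi> + \<tau> * cnj \<tau> * ip v v"
    using expand[of "1\<^sub>m N" N \<psi> v \<tau>] pc vc by simp
  finally have uu: "ip u u = ip \<psi> \<psi> + \<tau> * cnj \<tau> * complex_of_real a" using \<psi>v v\<psi> vv by simp
  have D: "Re (ip u u) = 1 + a * t^2" unfolding uu \<tau>_def using pp by (simp add: power2_eq_square)
  have Dpos: "1 + a * t^2 > 0" using a by (simp add: add_pos_nonneg)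
  have Hv2: "ip (H *\<^sub>v v) \<psi> = complex_of_real a"
  proof -
    have "ip (H *\<^sub>v v) \<psi> = ip v (H *\<^sub>v \<psi>)" using herm_ip[OF Hc Hh vc pc] .
    also have "\<dots> = cnj (ip (H *\<^sub>v \<psi>) v)" using ip_sym[of "H *\<^sub>v \<psi>" v] Hc vc by simp
    finally show ?thesis using Hv by simp
  qed
  have "ip (H *\<^sub>v u) u = ip (H *\<^sub>v \<psi>) \<psi> - cnj \<tau> * ip (H *\<^sub>v \<psi>) v - \<tau> * ip (H *\<^sub>v v) \<psi> + \<tau> * cnj \<tau> * ip (H *\<^sub>v v) v"
    unfolding u_def using expand[OF Hc pc vc] .
  then have Hu: "Re (ip (H *\<^sub>v u) u) = E0 - 2 * t * a + t^2 * c"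
    unfolding Hv Hv2 E0_def c_def \<tau>_def by (simp add: power2_eq_square)
  define \<rho> where "\<rho> = 1 / vnorm u"
  have vn: "vnorm u = sqrt (1 + a * t^2)" unfolding vnorm_def cip D ..
  have \<rho>2: "\<rho>^2 = 1 / (1 + a * t^2)" unfolding \<rho>_def vn using Dpos by (simp add: power_divide)
  have "expect H (complex_of_real \<rho> \<cdot>\<^sub>v u) = ip (H *\<^sub>v (complex_of_real \<rho> \<cdot>\<^sub>v u)) (complex_of_real \<rho> \<cdot>\<^sub>v u)"
    by (simp add: expect_def cip)
  also have "\<dots> = complex_of_real (\<rho>^2) * ip (H *\<^sub>v u) u"
    using Hc uc by (simp add: mult_mat_vec ip_smult_left ip_smult_right power2_eq_square)
  finally have "Re (expect H (complex_of_real \<rho> \<cdot>\<^sub>v u)) = (E0 - 2 * t * a + t^2 * c) / (1 + a * t^2)"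
    using Hu \<rho>2 by simp
  moreover have "Re (expect H \<psi>) = E0" by (simp add: expect_def cip E0_def)
  ultimately have "Re (expect H \<psi>) - Re (expect H (let u = \<psi> - complex_of_real t \<cdot>\<^sub>v v in complex_of_real (1 / vnorm u) \<cdot>\<^sub>v u))
      = E0 - (E0 - 2 * t * a + t^2 * c) / (1 + a * t^2)"
    by (simp add: Let_def u_def \<rho>_def \<tau>_def)
  also have "\<dots> = t * (2*a + (a * E0 - c) * t) / (1 + a * t^2)"
    using Dpos by (simp add: field_simps power2_eq_square)
  finally show ?thesis by (simp add: E0_def c_def expect_def cip)
qed

theorem lemma4:
  fixes n :: nat and Q G PV :: "complex mat set" and w :: "complex mat \<Rightarrow> real"
    and \<psi> :: "complex vec"
  defines "HQ \<equiv> lin_comb n (\<lambda>_. -1) G"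
    and "V \<equiv> lin_comb n (\<lambda>P. - complex_of_real (w P)) PV"
    and "Vperp \<equiv> lin_comb n (\<lambda>P. - complex_of_real (w P)) (PV - pauli_centralizer n Q)"
    and "\<Delta>gap \<equiv> (2::real)"
  assumes stab: "stabilizer_group n Q"
    and gen_sub: "G \<subseteq> Q"
    and gen_herm: "\<forall>g\<in>G. hermitian_mat g"
    and gen_indep: "independent_gens n G"
    and gen_gen: "generated n G = Q"
    and PV_fin: "finite PV"
    and PV_pauli: "PV \<subseteq> pauli_group n"
    and PV_herm: "\<forall>P\<in>PV. hermitian_mat P"
    and w_pos: "\<forall>P\<in>PV. w P > 0"
    and Vperp_nz: "Vperp \<noteq> 0\<^sub>m (2^n) (2^n)"
    and psi_code: "\<psi> \<in> code_space n Q"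
    and psi_state: "vnorm \<psi> = 1"
    and cond_i: "expect (Vperp * Vperp) \<psi> \<noteq> 0"
    and cond_ii: "(\<Sum>P\<in>PV - Q. w P) < \<Delta>gap - 2 * (\<Sum>P\<in>PV \<inter> Q. w P)"
  shows "let H = HQ + V;
             psi_l = (\<lambda>t::real. let u = \<psi> - complex_of_real t \<cdot>\<^sub>v (Vperp *\<^sub>v \<psi>)
                                in complex_of_real (1 / vnorm u) \<cdot>\<^sub>v u);
             \<Delta>E = (\<lambda>t::real. Re (expect H \<psi>) - Re (expect H (psi_l t)))
         in \<exists>tmax > 0. (\<forall>t. 0 < t \<and> t < tmax \<longrightarrow> \<Delta>E t > 0) \<and>
                       mono_on {0<..<tmax} \<Delta>E"
proof -
  let ?N = "2^n::nat"
  define C where "C = pauli_centralizer n Q"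
  have Qp: "Q \<subseteq> pauli_group n" using stab by (simp add: stabilizer_group_def)
  have pc: "\<psi> \<in> carrier_vec ?N" and fixq: "\<And>q. q \<in> Q \<Longrightarrow> q *\<^sub>v \<psi> = \<psi>"
    using psi_code by (auto simp: code_space_def)
  have PVc: "\<And>P. P \<in> PV \<Longrightarrow> P \<in> carrier_mat ?N ?N" using PV_pauli pauli_carrier by blast
  have Gc: "\<And>g. g \<in> G \<Longrightarrow> g \<in> carrier_mat ?N ?N" using gen_sub Qp pauli_carrier by blast
  have Wc: "Vperp \<in> carrier_mat ?N ?N" by (simp add: Vperp_def)
  have HQc: "HQ \<in> carrier_mat ?N ?N" by (simp add: HQ_def)
  have Vc: "V \<in> carrier_mat ?N ?N" by (simp add: V_def)
  have Wh: "hermitian_mat Vperp" unfolding Vperp_def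
    by (rule lc_herm) (use PVc PV_herm in auto)
  have HQh: "hermitian_mat HQ" unfolding HQ_def
    by (rule lc_herm) (use Gc gen_herm in auto)
  have Vh: "hermitian_mat V" unfolding V_def
    by (rule lc_herm) (use PVc PV_herm in auto)
  have Hc: "HQ + V \<in> carrier_mat ?N ?N" using HQc Vc by simp
  have Hh: "hermitian_mat (HQ + V)" using herm_add[OF HQh Vh HQc Vc] .
  define v where "v = Vperp *\<^sub>v \<psi>"
  have vc: "v \<in> carrier_vec ?N" using Wc pc by (simp add: v_def)
  have anti: "\<exists>q\<in>Q. P * q = - (q * P)" if P: "P \<in> PV - C" for P
  proof -
    have Pp: "P \<in> pauli_group n" using P PV_pauli by auto
    then obtain q where q: "q \<in> Q" "P * q \<noteq> q * P" using P by (auto simp: C_def pauli_centralizer_def)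
    then show ?thesis using pauli_dich[OF Pp, of q] Qp by auto
  qed
  have PVCc: "\<forall>P\<in>PV - C. P \<in> carrier_mat ?N ?N" using PVc by auto
  have K1: "ip v \<psi> = 0"
  proof -
    have "ip v \<psi> = (\<Sum>P\<in>PV - C. - complex_of_real (w P) * ip (P *\<^sub>v \<psi>) \<psi>)"
      unfolding v_def Vperp_def C_def[symmetric] by (rule lc_ip[OF pc pc PVCc])
    also have "\<dots> = 0"
    proof (rule sum.neutral, rule ballI)
      fix P assume P: "P \<in> PV - C"
      then obtain q where "q \<in> Q" "P * q = - (q * P)" using anti by blast
      then have "ip (P *\<^sub>v \<psi>) \<psi> = 0" using anti_zero[OF Qp _ psi_code] PVc P by blast
      then show "- complex_of_real (w P) * ip (P *\<^sub>v \<psi>) \<psi> = 0" by simp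
    qed
    finally show ?thesis .
  qed
  have K1': "ip \<psi> v = 0" using ip_sym[of v \<psi>] K1 pc vc by simp
  have K2a: "ip (HQ *\<^sub>v \<psi>) v = 0"
  proof -
    have "ip (HQ *\<^sub>v \<psi>) v = (\<Sum>g\<in>G. - 1 * ip (g *\<^sub>v \<psi>) v)"
      unfolding HQ_def by (rule lc_ip[OF pc vc]) (use Gc in auto)
    also have "\<dots> = 0" using fixq gen_sub K1' by (intro sum.neutral) auto
    finally show ?thesis .
  qed
  have K2b: "ip (P *\<^sub>v \<psi>) v = 0" if P: "P \<in> PV \<inter> C" for P
  proof -
    have Pc: "P \<in> carrier_mat ?N ?N" using P PVc by auto
    have Ph: "hermitian_mat P" using P PV_herm by auto
    have Pcomm: "\<And>q. q \<in> Q \<Longrightarrow> P * q = q * P" using P by (auto simp: C_def pauli_centralizer_def)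
    have "ip v (P *\<^sub>v \<psi>) = (\<Sum>P'\<in>PV - C. - complex_of_real (w P') * ip (P' *\<^sub>v \<psi>) (P *\<^sub>v \<psi>))"
      unfolding v_def Vperp_def C_def[symmetric] by (rule lc_ip[OF pc _ PVCc]) (use Pc pc in simp)
    also have "\<dots> = 0"
    proof (rule sum.neutral, rule ballI)
      fix P' assume P': "P' \<in> PV - C"
      have P'c: "P' \<in> carrier_mat ?N ?N" using P' PVc by auto
      obtain q where q: "q \<in> Q" and aq: "P' * q = - (q * P')" using anti[OF P'] by blast
      have qc: "q \<in> carrier_mat ?N ?N" using q Qp pauli_carrier by blast
      have "(P * P') * q = P * (P' * q)" using Pc P'c qc by simp
      also have "\<dots> = - (P * (q * P'))" unfolding aq using Pc P'c qc by (intro uminus_mult_right_mat) simp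
      also have "P * (q * P') = (P * q) * P'" using Pc P'c qc by simp
      also have "\<dots> = q * (P * P')" unfolding Pcomm[OF q] using Pc P'c qc by simp
      finally have an: "(P * P') * q = - (q * (P * P'))" .
      have "ip (P' *\<^sub>v \<psi>) (P *\<^sub>v \<psi>) = ip (P *\<^sub>v (P' *\<^sub>v \<psi>)) \<psi>"
        using herm_ip[OF Pc Ph, of "P' *\<^sub>v \<psi>" \<psi>] P'c pc by simp
      also have "P *\<^sub>v (P' *\<^sub>v \<psi>) = (P * P') *\<^sub>v \<psi>" using Pc P'c pc by simp
      also have "ip ((P * P') *\<^sub>v \<psi>) \<psi> = 0"
        using anti_zero[OF Qp q psi_code _ an] Pc P'c by simp
      finally show "- complex_of_real (w P') * ip (P' *\<^sub>v \<psi>) (P *\<^sub>v \<psi>) = 0" by simp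
    qed
    finally have "ip v (P *\<^sub>v \<psi>) = 0" .
    then show ?thesis using ip_sym[of v "P *\<^sub>v \<psi>"] Pc vc by simp
  qed
  have K2c: "ip (V *\<^sub>v \<psi>) v = ip v v"
  proof -
    have "ip (V *\<^sub>v \<psi>) v = (\<Sum>P\<in>PV. - complex_of_real (w P) * ip (P *\<^sub>v \<psi>) v)"
      unfolding V_def by (rule lc_ip[OF pc vc]) (use PVc in auto)
    also have "\<dots> = (\<Sum>P\<in>PV \<inter> C. - complex_of_real (w P) * ip (P *\<^sub>v \<psi>) v)
                 + (\<Sum>P\<in>PV - C. - complex_of_real (w P) * ip (P *\<^sub>v \<psi>) v)"
      by (rule sum.Int_Diff[OF PV_fin])
    also have "(\<Sum>P\<in>PV \<inter> C. - complex_of_real (w P) * ip (P *\<^sub>v \<psi>) v) = 0"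
      using K2b by (intro sum.neutral) auto
    also have "(\<Sum>P\<in>PV - C. - complex_of_real (w P) * ip (P *\<^sub>v \<psi>) v) = ip v v"
      unfolding v_def Vperp_def C_def[symmetric] by (rule lc_ip[OF pc _ PVCc, symmetric]) (rule mult_mat_vec_carrier[OF lc_carrier pc])
    finally show ?thesis by simp
  qed
  have K2: "ip ((HQ + V) *\<^sub>v \<psi>) v = ip v v"
  proof -
    have "(HQ + V) *\<^sub>v \<psi> = HQ *\<^sub>v \<psi> + V *\<^sub>v \<psi>" using HQc Vc pc by (simp add: add_mult_distrib_mat_vec)
    then show ?thesis using K2a K2c HQc Vc pc vc by (simp add: ip_add_left)
  qed
  define a where "a = (\<Sum>i<dim_vec v. (cmod (v $ i))^2)"
  have vv: "ip v v = complex_of_real a" unfolding a_def by (rule ip_self)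
  have a0: "a \<ge> 0" unfolding a_def by (intro sum_nonneg) auto
  have "ip v v \<noteq> 0"
  proof -
    have "expect (Vperp * Vperp) \<psi> = ip ((Vperp * Vperp) *\<^sub>v \<psi>) \<psi>" by (simp add: expect_def cip)
    also have "(Vperp * Vperp) *\<^sub>v \<psi> = Vperp *\<^sub>v v" using Wc pc by (simp add: v_def)
    also have "ip (Vperp *\<^sub>v v) \<psi> = ip v v" using herm_ip[OF Wc Wh vc pc] by (simp add: v_def)
    finally show ?thesis using cond_i by simp
  qed
  then have apos: "a > 0" using vv a0 by auto
  have pp: "Re (ip \<psi> \<psi>) = 1" using psi_state by (simp add: vnorm_def cip)
  define k where "k = a * Re (expect (HQ + V) \<psi>) - Re (ip ((HQ + V) *\<^sub>v v) v)"
  have EF: "Re (expect (HQ + V) \<psi>) - Re (expect (HQ + V) (let u = \<psi> - complex_of_real t \<cdot>\<^sub>v v in complex_of_real (1 / vnorm u) \<cdot>\<^sub>v u))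
     = t * (2*a + k * t) / (1 + a * t^2)" for t
    unfolding k_def using energy_formula[OF Hc Hh pc vc K1 _ vv pp a0] K2 vv by simp
  obtain tmax where tm: "tmax > 0" "\<forall>t. 0 < t \<and> t < tmax \<longrightarrow> t * (2*a + k * t) / (1 + a * t^2) > 0"
     "mono_on {0<..<tmax} (\<lambda>t. t * (2*a + k * t) / (1 + a * t^2))"
    using real_part[OF apos, of k] by blast
  define F where "F = (\<lambda>t. Re (expect (HQ + V) \<psi>) - Re (expect (HQ + V) (let u = \<psi> - complex_of_real t \<cdot>\<^sub>v v in complex_of_real (1 / vnorm u) \<cdot>\<^sub>v u)))"
  have eqf: "F = (\<lambda>t. t * (2*a + k * t) / (1 + a * t^2))" unfolding F_def using EF by (rule ext)
  have "\<exists>tmax>0. (\<forall>t. 0 < t \<and> t < tmax \<longrightarrow> F t > 0) \<and> mono_on {0<..<tmax} F"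
    unfolding eqf using tm by blast
  then show ?thesis unfolding F_def v_def Let_def .
qed

end
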